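(* Let $X=\mathbb{CP}^2\#n\overline{\mathbb{CP}}^2$, $k\ge1$, and let $[\omega]\in\mathcal{P}^{c_1>0}$ be a $c_1$-nef symplectic class on $X$. For small $\varepsilon>0$ let $\omega_\varepsilon$ be the symplectic form on $X\#\overline{\mathbb{CP}}^2$ obtained by a blowup of size $\varepsilon$, i.e. with class $[\omega]-\varepsilon PD(E_{n+1})$. Then $\lim_{\varepsilon\to0}f_k(X\#\overline{\mathbb{CP}}^2,\omega_\varepsilon)=f_k(X,\omega)$.
   Context: $K_0=-3H+E_1+\cdots+E_n$ (and $-3H+E_1+\cdots+E_{n+1}$ on the blowup), $\mathrm{ind}(A):=A^2-K_0\cdot A$. For a rational manifold $Y=\mathbb{CP}^2\#m\overline{\mathbb{CP}}^2$ with symplectic form $\omega$ of standard canonical class, $f_k(Y,\omega)=\inf\{\omega(A):A\in H_2(Y;\mathbb{Z})\ J\text{-nef},\ \mathrm{ind}(A)\ge2k\}$ for any $\omega$-tame $J$ ($A$ is $J$-nef if it pairs nonnegatively with all classes of $J$-holomorphic subvarieties); it depends only on $[\omega]$ and equals $\inf\{\omega(A):\mathrm{ind}(A)\ge2k,\ A\cdot H>0\}$. With $H^2\cong\mathbb{R}^{n+1}$ via $(x_0,\dots,x_n)\leftrightarrow x_0PD(H)-\sum x_iPD(E_i)$, the reduced cone $\mathcal{P}$ is: $0<x_1<x_0$ ($n=1$); $0<x_2\le x_1$, $x_1+x_2<x_0$ ($n=2$); $0<x_n\le\cdots\le x_1$, $x_1+x_2+x_3\le x_0$, $\sum x_i^2<x_0^2$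 ($n\ge3$); $\mathcal{P}^{c_1>0}=\{[\omega]\in\mathcal{P}:\omega(3H-\sum E_i)>0\}$. *)

theory Defs
  imports "HOL-Analysis.Analysis"
begin

text \<open>Homology classes of CP^2 # n (-CP^2): A = a H - sum_{i=1..n} b_i E_i, encoded by
  (a, b) with a :: int and b :: nat => int (only b 1, ..., b n matter).
  Cohomology classes: x :: nat => real with x 0 = x_0 and x i = x_i (i = 1..n),
  corresponding to x_0 PD(H) - sum x_i PD(E_i).\<close>

definition selfint :: "nat \<Rightarrow> int \<Rightarrow> (nat \<Rightarrow> int) \<Rightarrow> int" where
  "selfint n a b = a^2 - (\<Sum>i=1..n. (b i)^2)"

definition K0_dot :: "nat \<Rightarrow> int \<Rightarrow> (nat \<Rightarrow> int) \<Rightarrow> int" where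
  "K0_dot n a b = -3 * a + (\<Sum>i=1..n. b i)"

definition ind :: "nat \<Rightarrow> int \<Rightarrow> (nat \<Rightarrow> int) \<Rightarrow> int" where
  "ind n a b = selfint n a b - K0_dot n a b"

definition pairing :: "nat \<Rightarrow> (nat \<Rightarrow> real) \<Rightarrow> int \<Rightarrow> (nat \<Rightarrow> int) \<Rightarrow> real" where
  "pairing n x a b = of_int a * x 0 - (\<Sum>i=1..n. x i * of_int (b i))"

definition fk :: "nat \<Rightarrow> (nat \<Rightarrow> real) \<Rightarrow> nat \<Rightarrow> real" where
  "fk n x k = Inf {pairing n x a b | a b. a > 0 \<and> ind n a b \<ge> 2 * int k}"

definition reduced_cone :: "nat \<Rightarrow> (nat \<Rightarrow> real) \<Rightarrow> bool" where
  "reduced_cone n x \<longleftrightarrow>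
     (if n = 1 then 0 < x 1 \<and> x 1 < x 0
      else if n = 2 then 0 < x 2 \<and> x 2 \<le> x 1 \<and> x 1 + x 2 < x 0
      else 0 < x n \<and> (\<forall>i\<in>{1..<n}. x (Suc i) \<le> x i) \<and> x 1 + x 2 + x 3 \<le> x 0
           \<and> (\<Sum>i=1..n. (x i)^2) < (x 0)^2)"

definition c1_pos :: "nat \<Rightarrow> (nat \<Rightarrow> real) \<Rightarrow> bool" where
  "c1_pos n x \<longleftrightarrow> 3 * x 0 - (\<Sum>i=1..n. x i) > 0"

definition P_c1pos :: "nat \<Rightarrow> (nat \<Rightarrow> real) \<Rightarrow> bool" where
  "P_c1pos n x \<longleftrightarrow> reduced_cone n x \<and> c1_pos n x"

end

theory Submission
  imports Defs
begin

lemma term_ineq: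
  fixes l b y :: real assumes "l > 0"
  shows "b*y \<le> l*(b^2+b) + y^2/(4*l) - y/2 + l/4"
proof -
  have "0 \<le> (2*l*b + l - y)^2" by simp
  hence "4*l*(b*y) \<le> 4*l*(l*(b^2+b) + y^2/(4*l) - y/2 + l/4)"
    using assms by (simp add: algebra_simps power2_eq_square)
  thus ?thesis using assms by simp
qed

lemma int_sq_plus: "(0::int) \<le> c^2 + c"
proof -
  have "c^2 + c = c*(c+1)" by (simp add: power2_eq_square algebra_simps)
  also have "\<dots> \<ge> 0" by (cases "c \<ge> 0") (auto simp: zero_le_mult_iff)
  finally show ?thesis .
qed

lemma ind_le: "ind N a b \<le> a^2 + 3*a"
proof -
  have "0 \<le> (\<Sum>i=1..N. (b i)^2 + b i)" by (rule sum_nonneg) (simp add: int_sq_plus)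
  thus ?thesis by (simp add: ind_def selfint_def K0_dot_def sum.distrib)
qed

lemma growth:
  fixes N :: nat and x :: "nat \<Rightarrow> real" and a :: int and b
  assumes x0: "x 0 > 0" and s: "(\<Sum>i=1..N. (x i)^2) < (x 0)^2" and a: "a > 0"
    and ind: "ind N a b \<ge> 0"
  shows "pairing N x a b \<ge> ((x 0)^2 - (\<Sum>i=1..N. (x i)^2))/(2*x 0) * a
           - (3*x 0/2 + N * x 0/8 + (\<Sum>i=1..N. \<bar>x i\<bar>)/2)"
proof -
  define ra where "ra = real_of_int a"
  have ra: "ra \<ge> 1" using a by (simp add: ra_def)
  define l where "l = x 0 / (2*ra)"
  have l: "l > 0" using x0 ra by (simp add: l_def)
  define s2 where "s2 = (\<Sum>i=1..N. (x i)^2)"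
  define T where "T = (\<Sum>i=1..N. (real_of_int (b i))^2 + real_of_int (b i))"
  have T: "T \<le> ra^2 + 3*ra"
  proof -
    have "real_of_int (ind N a b) \<ge> 0" using ind by simp
    thus ?thesis by (simp add: T_def ra_def ind_def selfint_def K0_dot_def sum.distrib)
  qed
  have "(\<Sum>i=1..N. x i * real_of_int (b i)) \<le>
        (\<Sum>i=1..N. l*((real_of_int (b i))^2 + real_of_int (b i)) + (x i)^2/(4*l) - x i/2 + l/4)"
    by (rule sum_mono) (metis term_ineq[OF l] mult.commute)
  also have "\<dots> = l*T + s2/(4*l) - (\<Sum>i=1..N. x i)/2 + N*l/4"
  proof -
    have "(\<Sum>i=1..N. l*((real_of_int (b i))^2 + real_of_int (b i))) = l*T"
      by (simp add: T_def sum_distrib_left)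
    moreover have "(\<Sum>i=1..N. (x i)^2/(4*l)) = s2/(4*l)" by (simp add: s2_def sum_divide_distrib)
    moreover have "(\<Sum>i=1..N. x i/2) = (\<Sum>i=1..N. x i)/2" by (simp add: sum_divide_distrib)
    moreover have "(\<Sum>i=1..N. l*((real_of_int (b i))^2 + real_of_int (b i)) + (x i)^2/(4*l) - x i/2 + l/4)
      = (\<Sum>i=1..N. l*((real_of_int (b i))^2 + real_of_int (b i))) + (\<Sum>i=1..N. (x i)^2/(4*l))
        - (\<Sum>i=1..N. x i/2) + N*l/4"
      by (simp only: sum.distrib sum_subtractf sum_constant) simp
    ultimately show ?thesis by linarith
  qed
  also have "\<dots> \<le> l*(ra^2+3*ra) + s2/(4*l) + (\<Sum>i=1..N. \<bar>x i\<bar>)/2 + N*l/4"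
  proof -
    have "l*T \<le> l*(ra^2+3*ra)" using T l by simp
    moreover have "- (\<Sum>i=1..N. x i) \<le> (\<Sum>i=1..N. \<bar>x i\<bar>)"
      using sum_abs[of x "{1..N}"] abs_le_D2 by (metis abs_ge_minus_self order.trans)
    ultimately show ?thesis by linarith
  qed
  also have "\<dots> = x 0 * ra/2 + 3*x 0/2 + s2*ra/(2*x 0) + (\<Sum>i=1..N. \<bar>x i\<bar>)/2 + N*x 0/(8*ra)"
    using ra x0 by (simp add: l_def field_simps power2_eq_square)
  also have "\<dots> \<le> x 0 * ra/2 + 3*x 0/2 + s2*ra/(2*x 0) + (\<Sum>i=1..N. \<bar>x i\<bar>)/2 + N*x 0/8"
  proof -
    have "N*x 0/(8*ra) \<le> N*x 0/8" using ra x0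
      by (intro divide_left_mono) auto
    thus ?thesis by linarith
  qed
  finally have B: "(\<Sum>i=1..N. x i * real_of_int (b i)) \<le>
     x 0 * ra/2 + 3*x 0/2 + s2*ra/(2*x 0) + (\<Sum>i=1..N. \<bar>x i\<bar>)/2 + N*x 0/8" .
  have E: "(x 0^2 - s2)/(2*x 0) * ra = ra * x 0 - (x 0 * ra/2 + s2*ra/(2*x 0))"
    using x0 by (simp add: field_simps power2_eq_square)
  have P: "pairing N x a b = ra * x 0 - (\<Sum>i=1..N. x i * real_of_int (b i))"
    by (simp add: pairing_def ra_def mult.commute)
  have "pairing N x a b \<ge> (x 0^2 - s2)/(2*x 0) * ra
           - (3*x 0/2 + N * x 0/8 + (\<Sum>i=1..N. \<bar>x i\<bar>)/2)"
    using B E P by linarith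
  thus ?thesis by (simp add: s2_def ra_def)
qed

lemma dec_chain:
  assumes "\<forall>i\<in>{1..<n}. x (Suc i) \<le> (x i::real)" "1 \<le> i" "i \<le> n"
  shows "x n \<le> x i"
  using assms(3,2)
proof (induction rule: inc_induct)
  case base then show ?case by simp
next
  case (step j) then show ?case using assms(1) by force
qed

lemma cone_facts:
  assumes "n \<ge> 1" "P_c1pos n x"
  shows "x 0 > 0 \<and> (\<Sum>i=1..n. (x i)^2) < (x 0)^2"
proof -
  have rc: "reduced_cone n x" using assms by (simp add: P_c1pos_def)
  consider "n = 1" | "n = 2" | "n \<ge> 3" using assms(1) by linarith
  thus ?thesis
  proof cases
    case 1
    then have "0 < x 1" "x 1 < x 0" using rc by (auto simp: reduced_cone_def)
    then show ?thesis using 1 by (simp add: power_strict_mono)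
  next
    case 2
    then have h: "0 < x 2" "x 2 \<le> x 1" "x 1 + x 2 < x 0" using rc by (auto simp: reduced_cone_def)
    have s: "{1..2::nat} = {1,2}" by auto
    have "(x 1)^2 + (x 2)^2 < (x 1 + x 2)^2" using h by (simp add: power2_eq_square algebra_simps)
    also have "\<dots> < (x 0)^2" using h by (intro power_strict_mono) auto
    finally show ?thesis using 2 h s by simp
  next
    case 3
    then have h: "0 < x n" "\<forall>i\<in>{1..<n}. x (Suc i) \<le> x i" "x 1 + x 2 + x 3 \<le> x 0"
      "(\<Sum>i=1..n. (x i)^2) < (x 0)^2" using rc by (auto simp: reduced_cone_def)
    have "x n \<le> x 1" "x n \<le> x 2" "x n \<le> x 3" using dec_chain[OF h(2)] 3 by auto
    then show ?thesis using h by linarith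
  qed
qed

lemma ind_Suc: "ind (Suc n) a b = ind n a b - (b (Suc n))^2 - b (Suc n)"
  by (simp add: ind_def selfint_def K0_dot_def)

lemma pairing_Suc: "pairing (Suc n) (x(Suc n := e)) a b = pairing n x a b - e * b (Suc n)"
proof -
  have "(\<Sum>i=1..n. (x(Suc n := e)) i * of_int (b i)) = (\<Sum>i=1..n. x i * of_int (b i))"
    by (rule sum.cong) auto
  thus ?thesis by (simp add: pairing_def)
qed

theorem corollary4p7:
  fixes n k :: nat and x :: "nat \<Rightarrow> real"
  assumes "n \<ge> 1" and "k \<ge> 1" and "P_c1pos n x"
  shows "((\<lambda>\<epsilon>. fk (Suc n) (x(Suc n := \<epsilon>)) k) \<longlongrightarrow> fk n x k) (at_right 0)"
proof -
  have cf: "x 0 > 0" "(\<Sum>i=1..n. (x i)^2) < (x 0)^2" using cone_facts[OF assms(1,3)] by auto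
  define \<delta> where "\<delta> = ((x 0)^2 - (\<Sum>i=1..n. (x i)^2))/(2*x 0)"
  define C where "C = 3*x 0/2 + n * x 0/8 + (\<Sum>i=1..n. \<bar>x i\<bar>)/2"
  have \<delta>: "\<delta> > 0" using cf by (simp add: \<delta>_def)
  have C: "C \<ge> 0" using cf by (simp add: C_def sum_nonneg)
  have gr: "pairing n x a b \<ge> \<delta> * a - C" if "a > 0" "ind n a b \<ge> 2 * int k" for a b
    using growth[OF cf, of a b] that by (simp add: \<delta>_def C_def)
  define S where "S = {pairing n x a b | a b. a > 0 \<and> ind n a b \<ge> 2 * int k}"
  define F where "F = fk n x k"
  have F: "F = Inf S" by (simp add: F_def fk_def S_def)
  have k0: "ind n (int k) (\<lambda>_. 0) \<ge> 2 * int k"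
    by (simp add: ind_def selfint_def K0_dot_def power2_eq_square)
  have kp: "int k > 0" using assms(2) by simp
  have "pairing n x (int k) (\<lambda>_. 0) \<in> S" unfolding S_def
    using k0 kp by blast
  hence Sne: "S \<noteq> {}" by blast
  have Sbdd: "bdd_below S"
  proof (rule bdd_belowI[of _ "- C"])
    fix p assume "p \<in> S"
    then obtain a b where ab: "p = pairing n x a b" "a > 0" "ind n a b \<ge> 2 * int k" by (auto simp: S_def)
    have "\<delta> * a \<ge> 0" using \<delta> ab(2) by simp
    then show "- C \<le> p" using gr[OF ab(2,3)] ab(1) by linarith
  qed
  have Fl: "F \<le> pairing n x a b" if "a > 0" "ind n a b \<ge> 2 * int k" for a b
    unfolding F using that Sbdd by (intro cInf_lower) (auto simp: S_def)
  define M where "M = 2*(\<bar>F\<bar> + \<delta> + C)/\<delta>"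
  have M: "M \<ge> 0" using \<delta> C by (simp add: M_def)
  define S' where "S' e = {pairing (Suc n) (x(Suc n := e)) a b | a b. a > 0 \<and> ind (Suc n) a b \<ge> 2 * int k}" for e
  have low: "F - e * M \<le> p" if e: "0 < e" "e \<le> \<delta>/2" and p: "p \<in> S' e" for e p
  proof -
    obtain a b where pe: "p = pairing (Suc n) (x(Suc n := e)) a b" and a: "a > 0"
      and i: "ind (Suc n) a b \<ge> 2 * int k" using p by (auto simp: S'_def)
    define m where "m = b (Suc n)"
    have pe': "p = pairing n x a b - e * m" using pe by (simp add: pairing_Suc m_def)
    have i': "ind n a b \<ge> 2 * int k + m^2 + m" using i by (simp add: ind_Suc m_def)
    have mm: "m^2 + m \<ge> 0" by (rule int_sq_plus)
    have P1: "pairing n x a b \<ge> F" using Fl[OF a] i' mm by simp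
    show ?thesis
    proof (cases "m \<le> 0")
      case True
      have "e * m \<le> 0" using e True by (simp add: mult_nonneg_nonpos)
      have "e * M \<ge> 0" using e M by simp
      then show ?thesis using pe' P1 \<open>e * m \<le> 0\<close> by linarith
    next
      case False
      have "m \<le> a + 1"
      proof (rule ccontr)
        assume "\<not> m \<le> a + 1"
        hence "m \<ge> a + 2" by simp
        hence "m * m \<ge> (a+2)*(a+2)" using a by (intro mult_mono) auto
        moreover have "ind n a b \<le> a^2 + 3*a" by (rule ind_le)
        ultimately show False using i' a \<open>m \<ge> a + 2\<close> by (simp add: power2_eq_square algebra_simps)
      qed
      hence ma: "real_of_int m - 1 \<le> real_of_int a" by linarith
      have P2: "pairing n x a b \<ge> \<delta> * (m - 1) - C"
      proof -
        have "\<delta> * (m - 1) \<le> \<delta> * a" using ma \<delta> by (intro mult_left_mono) auto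
        moreover have "pairing n x a b \<ge> \<delta> * a - C" using gr[OF a] i' mm by simp
        ultimately show ?thesis by linarith
      qed
      show ?thesis
      proof (cases "real_of_int m \<le> M")
        case True
        then have "e * m \<le> e * M" using e by (intro mult_left_mono) auto
        then show ?thesis using pe' P1 by linarith
      next
        case False
        have em: "e * m \<le> \<delta>/2 * m" using e \<open>\<not> m \<le> 0\<close> by (intro mult_right_mono) auto
        have "\<delta> * M = 2*(\<bar>F\<bar> + \<delta> + C)" using \<delta> by (simp add: M_def)
        moreover have "\<delta> * M \<le> \<delta> * m" using False \<delta> by simp
        ultimately have dm: "\<delta> * m \<ge> 2*(\<bar>F\<bar> + \<delta> + C)" by linarith
        have em': "e * m \<le> (\<delta> * m)/2" using em by simp
        have d1: "\<delta> * (m - 1) = \<delta> * m - \<delta>" by (simp add: algebra_simps)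
        have "p \<ge> F" using pe' P2 em' dm d1 abs_ge_self[of F] by argo
        moreover have "e * M \<ge> 0" using e M by simp
        ultimately show ?thesis by linarith
      qed
    qed
  qed
  have ext: "pairing n x a b \<in> S' e" if "pairing n x a b \<in> S" for a b e
  proof -
    from that obtain a' b' where q: "pairing n x a b = pairing n x a' b'" "a' > 0" "ind n a' b' \<ge> 2 * int k"
      by (auto simp: S_def)
    define b'' where "b'' = b'(Suc n := 0)"
    have "ind n a' b'' = ind n a' b'" "pairing n x a' b'' = pairing n x a' b'"
      unfolding b''_def ind_def selfint_def K0_dot_def pairing_def
      by (auto intro!: sum.cong)
    hence "pairing (Suc n) (x(Suc n := e)) a' b'' = pairing n x a b" "ind (Suc n) a' b'' \<ge> 2 * int k"
      using q by (auto simp: pairing_Suc ind_Suc b''_def)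
    thus ?thesis using q(2) unfolding S'_def
      by (intro CollectI exI[of _ a'] exI[of _ b'']) simp
  qed
  have bounds: "F - e * M \<le> fk (Suc n) (x(Suc n := e)) k \<and> fk (Suc n) (x(Suc n := e)) k \<le> F"
    if e: "0 < e" "e < \<delta>/2" for e
  proof -
    have fke: "fk (Suc n) (x(Suc n := e)) k = Inf (S' e)" by (simp add: fk_def S'_def)
    have S'ne: "S' e \<noteq> {}"
    proof -
      obtain p where "p \<in> S" using Sne by auto
      then obtain a b where "p = pairing n x a b" by (auto simp: S_def)
      then show ?thesis using ext \<open>p \<in> S\<close> by blast
    qed
    have lowe: "\<And>p. p \<in> S' e \<Longrightarrow> F - e * M \<le> p" using low e by auto
    have bb: "bdd_below (S' e)" using lowe by (rule bdd_belowI)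
    have "F - e * M \<le> Inf (S' e)" using S'ne lowe by (rule cInf_greatest)
    moreover have "Inf (S' e) \<le> Inf S"
    proof (rule cInf_mono[OF Sne bb])
      fix p assume "p \<in> S"
      then obtain a b where "p = pairing n x a b" by (auto simp: S_def)
      then show "\<exists>q\<in>S' e. q \<le> p" using ext \<open>p \<in> S\<close> by blast
    qed
    ultimately show ?thesis using fke F by simp
  qed
  have ev: "\<forall>\<^sub>F e in at_right 0. F - e * M \<le> fk (Suc n) (x(Suc n := e)) k"
    and ev2: "\<forall>\<^sub>F e in at_right 0. fk (Suc n) (x(Suc n := e)) k \<le> F"
    unfolding eventually_at_right_field using bounds \<delta>
    by (metis half_gt_zero)+
  have l1: "((\<lambda>e. F - e * M) \<longlongrightarrow> F) (at_right 0)"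
  proof -
    have "((\<lambda>e. F - e * M) \<longlongrightarrow> F - 0 * M) (at_right 0)"
      by (intro tendsto_intros)
    thus ?thesis by simp
  qed
  show ?thesis unfolding F_def[symmetric]
    by (rule tendsto_sandwich[OF ev ev2 l1 tendsto_const])
qed

end
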